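(* Consider the AdaDROPS scheme described in the context (with either Option I or Option II as the support-update rule), and let $\bar{\mathcal{I}}\subseteq\{1,\dots,N\}$ be the set at which the nondecreasing sequence $\mathcal{I}^{(k)}$ eventually stabilizes. Assume the iterates $x^{(k)}$ converge to a point $\tilde{x}$ which is a minimizer of the restricted problem $$\min_{x\in\mathbb{R}^n}\ \frac{1}{2\lambda}\|AP_{\bar T}x-y\|^2+\|LP_{\bar T}x\|_{1,2}$$ and satisfies $\tilde{x}_i=0$ for all $i\notin\bar{\mathcal{E}}$. Then $\tilde{x}$ is a global minimizer of the original problem $$\min_{x\in\mathbb{R}^n}\ \frac{1}{2\lambda}\|Ax-y\|^2+\|Lx\|_{1,2}.$$
   Context: Let $n,N\in\mathbb{N}$, let $G_1,\dots,G_N\subseteq\{1,\dots,n\}$ be nonempty groups, possibly overlapping, with $\bigcup_iG_i=\{1,\dots,n\}$, and weights $w_i>0$. $x_G$ denotes the subvector of $x$ indexed by $G$ (increasing order). Let $p=\sum_i|G_i|$, partition $\{1,\dots,p\}$ into consecutive blocks $J_i=\{\sum_{j<i}|G_j|+1,\dots,\sum_{j\le i}|G_j|\}$, and define the lifting operator $L\in\mathbb{R}^{p\times n}$ by $(Lx)_{J_i}=w_ix_{G_i}$; for $z\in\mathbb{R}^p$, $\|z\|_{1,2}=\sum_i\|z_{J_i}\|$ (Euclidean norms). Let $A\in\mathbb{R}^{m\times n}$, $y\in\mathbb{R}^m$, $\lambda>0$. For an index set $\mathcal{I}\subseteq\{1,\dots,N\}$ define $\mathcal{E}(\mathcal{I})=\{1,\dots,n\}\setminus\bigcup_{t\notin\mathcal{I}}G_t$,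 $T(\mathcal{I})=\{x\in\mathbb{R}^n:\mathrm{supp}(x)\subseteq\mathcal{E}(\mathcal{I})\}$, $\mathcal{E}_z(\mathcal{I})=\bigcup_{t\in\mathcal{I}}J_t$, $T_z(\mathcal{I})=\{z\in\mathbb{R}^p:\mathrm{supp}(z)\subseteq\mathcal{E}_z(\mathcal{I})\}$, and $\widehat{L}(\mathcal{I})=L-P_{T_z(\mathcal{I})}LP_{T(\mathcal{I})^\perp}$, where $P_T$ is the orthogonal (coordinate) projection onto $T$ and $T^\perp$ its orthogonal complement; $\widehat{L}(\mathcal{I})^\top\widehat{L}(\mathcal{I})$ is invertible. AdaDROPS scheme: starting from some $\mathcal{I}^{(0)}$ and $x^{(0)}$, at step $k$ an inner solver produces $x^{(k+1)}$ (for the problem restricted to $T(\mathcal{I}^{(k)})$, i.e. with $A,L$ replaced by $AP_{T(\mathcal{I}^{(k)})},LP_{T(\mathcal{I}^{(k)})}$); then with $\beta^{(k+1)}=-\frac1\lambda A^\top(Ax^{(k+1)}-y)$ the index set is updated by Option I: $\mathcal{I}^{(k+1)}=\mathcal{I}^{(k)}\cup\{t:\|\beta^{(k+1)}_{G_t}\|\ge w_t\}$, or Option II: with $u^{(k+1)}=\widehat{L}(\mathcal{I}^{(k)})(\widehat{L}(\mathcal{I}^{(k)})^\top\widehat{L}(\mathcal{I}^{(k)}))^{-1}\beta^{(k+1)}$, $\mathcal{I}^{(k+1)}=\mathcal{I}^{(k)}\cup\{t:\|u^{(k+1)}_{J_t}\|\ge 1\}$. Since $\mathcal{I}^{(k)}$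 is nondecreasing in a finite set it stabilizes at some $\bar{\mathcal{I}}$; write $\bar{\mathcal{E}}=\mathcal{E}(\bar{\mathcal{I}})$ and $\bar T=T(\bar{\mathcal{I}})$. *)

theory Defs
  imports "HOL-Analysis.Analysis"
begin

text \<open>The lifted space R^p is represented as real^('g \<times> 'n): block J_t consists of the
  coordinates (t,j) with j \<in> G t; the remaining coordinates (t,j) with j \<notin> G t are
  dummy coordinates on which L (and hence everything derived from it) vanishes.\<close>

definition liftL :: "('g::finite \<Rightarrow> 'n::finite set) \<Rightarrow> ('g \<Rightarrow> real) \<Rightarrow> real^'n^('g \<times> 'n)" where
  "liftL G w = (\<chi> r i. if snd r \<in> G (fst r) \<and> i = snd r then w (fst r) else 0)"

definition blocknorm :: "('g::finite \<Rightarrow> 'n::finite set) \<Rightarrow> real^('g \<times> 'n) \<Rightarrow> 'g \<Rightarrow> real" where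
  "blocknorm G z t = sqrt (\<Sum>j\<in>G t. (z $ (t, j))\<^sup>2)"

definition norm12 :: "('g::finite \<Rightarrow> 'n::finite set) \<Rightarrow> real^('g \<times> 'n) \<Rightarrow> real" where
  "norm12 G z = (\<Sum>t\<in>UNIV. blocknorm G z t)"

definition subnorm :: "'n::finite set \<Rightarrow> real^'n \<Rightarrow> real" where
  "subnorm S x = sqrt (\<Sum>j\<in>S. (x $ j)\<^sup>2)"

definition Eset :: "('g::finite \<Rightarrow> 'n::finite set) \<Rightarrow> 'g set \<Rightarrow> 'n set" where
  "Eset G I = UNIV - (\<Union>t\<in>UNIV - I. G t)"

definition projT :: "('g::finite \<Rightarrow> 'n::finite set) \<Rightarrow> 'g set \<Rightarrow> real^'n^'n" where
  "projT G I = (\<chi> i j. if i = j \<and> i \<in> Eset G I then 1 else 0)"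

definition projTz :: "('g::finite \<Rightarrow> 'n::finite set) \<Rightarrow> 'g set \<Rightarrow> real^('g \<times> 'n)^('g \<times> 'n)" where
  "projTz G I = (\<chi> r s. if r = s \<and> fst r \<in> I \<and> snd r \<in> G (fst r) then 1 else 0)"

definition Lhat :: "('g::finite \<Rightarrow> 'n::finite set) \<Rightarrow> ('g \<Rightarrow> real) \<Rightarrow> 'g set \<Rightarrow> real^'n^('g \<times> 'n)" where
  "Lhat G w I = liftL G w - projTz G I ** liftL G w ** (mat 1 - projT G I)"

definition objective :: "('g::finite \<Rightarrow> 'n::finite set) \<Rightarrow> real^'n^'m::finite \<Rightarrow> real^'m \<Rightarrow> real
    \<Rightarrow> real^'n^('g \<times> 'n) \<Rightarrow> real^'n \<Rightarrow> real" where
  "objective G A y lam L x = 1 / (2 * lam) * (norm (A *v x - y))\<^sup>2 + norm12 G (L *v x)"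

definition betavec :: "real^'n::finite^'m::finite \<Rightarrow> real^'m \<Rightarrow> real \<Rightarrow> real^'n \<Rightarrow> real^'n" where
  "betavec A y lam x = (- (1 / lam)) *\<^sub>R (transpose A *v (A *v x - y))"

definition optionI_update :: "('g::finite \<Rightarrow> 'n::finite set) \<Rightarrow> ('g \<Rightarrow> real) \<Rightarrow> 'g set \<Rightarrow> real^'n \<Rightarrow> 'g set" where
  "optionI_update G w I b = I \<union> {t. subnorm (G t) b \<ge> w t}"

definition optionII_update :: "('g::finite \<Rightarrow> 'n::finite set) \<Rightarrow> ('g \<Rightarrow> real) \<Rightarrow> 'g set \<Rightarrow> real^'n \<Rightarrow> 'g set" where
  "optionII_update G w I b =
     (let Lh = Lhat G w I;
          u = Lh *v (matrix_inv (transpose Lh ** Lh) *v b)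
      in I \<union> {t. blocknorm G u t \<ge> 1})"

end

theory Submission
  imports Defs
begin

lemma liftL_mult: "(liftL G w *v x) $ r = (if snd r \<in> G (fst r) then w (fst r) * x $ snd r else 0)"
  unfolding matrix_vector_mult_def liftL_def
  by (auto simp: if_distrib[where f="\<lambda>a. a * c" for c] sum.delta' cong: if_cong)

lemma projT_mult: "(projT G I *v x) $ i = (if i \<in> Eset G I then x $ i else 0)"
  unfolding matrix_vector_mult_def projT_def
  by (auto simp: if_distrib[where f="\<lambda>a. a * c" for c] sum.delta cong: if_cong)

definition rv :: "'n::finite set \<Rightarrow> real^'n \<Rightarrow> real^'n" where
  "rv S x = (\<chi> j. if j \<in> S then x $ j else 0)"

lemma subnorm_rv: "subnorm S x = norm (rv S x)"
proof -
  have "(\<Sum>j\<in>UNIV. (if j \<in> S then x $ j else 0)\<^sup>2) = (\<Sum>j\<in>S. (x $ j)\<^sup>2)"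
    by (simp add: if_distrib[where f="\<lambda>a. a ^ 2"] sum.If_cases)
  then show ?thesis unfolding subnorm_def norm_vec_def L2_set_def rv_def by simp
qed

lemma norm12_liftL:
  assumes "\<And>t. w t > 0"
  shows "norm12 G (liftL G w *v x) = (\<Sum>t\<in>UNIV. w t * subnorm (G t) x)"
  unfolding norm12_def
proof (rule sum.cong[OF refl])
  fix t
  have "blocknorm G (liftL G w *v x) t = sqrt ((w t)\<^sup>2 * (\<Sum>j\<in>G t. (x $ j)\<^sup>2))"
    unfolding blocknorm_def liftL_mult by (simp add: power_mult_distrib sum_distrib_left)
  also have "\<dots> = w t * subnorm (G t) x"
    unfolding subnorm_def real_sqrt_mult using assms[of t] by simp
  finally show "blocknorm G (liftL G w *v x) t = w t * subnorm (G t) x" .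
qed

lemma rv_add: "rv S (a + b) = rv S a + rv S b" by (simp add: rv_def vec_eq_iff)
lemma rv_scale: "rv S (c *\<^sub>R a) = c *\<^sub>R rv S a" by (simp add: rv_def vec_eq_iff)

lemma subnorm_convex:
  assumes "0 \<le> s" "s \<le> 1"
  shows "subnorm S ((1 - s) *\<^sub>R a + s *\<^sub>R b) \<le> (1 - s) * subnorm S a + s * subnorm S b"
  unfolding subnorm_rv rv_add rv_scale
  by (metis (no_types, lifting) abs_of_nonneg assms diff_ge_0_iff_ge norm_scaleR norm_triangle_ineq)

lemma subnorm_cs: "(\<Sum>j\<in>S. a $ j * b $ j) \<le> subnorm S a * subnorm S b"
proof -
  have "(\<Sum>j\<in>S. a $ j * b $ j) = inner (rv S a) (rv S b)"
    unfolding inner_vec_def rv_def by (simp add: if_distrib sum.If_cases)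
  also have "\<dots> \<le> norm (rv S a) * norm (rv S b)" by (rule norm_cauchy_schwarz)
  finally show ?thesis unfolding subnorm_rv .
qed

lemma subnorm_mono:
  assumes "\<And>j. j \<in> S \<Longrightarrow> \<bar>a $ j\<bar> \<le> \<bar>b $ j\<bar>"
  shows "subnorm S a \<le> subnorm S b"
  unfolding subnorm_def
  by (intro real_sqrt_le_mono sum_mono) (metis assms abs_le_square_iff power2_abs)

lemma subnorm_nonneg: "subnorm S a \<ge> 0" unfolding subnorm_def by (simp add: sum_nonneg)

lemma sum_single_UNIV:
  fixes f :: "'a::finite \<Rightarrow> real"
  assumes "\<And>j. j \<noteq> i \<Longrightarrow> f j = 0"
  shows "(\<Sum>j\<in>UNIV. f j) = f i"
proof -
  have "(\<Sum>j\<in>UNIV. f j) = f i + (\<Sum>j\<in>UNIV - {i}. f j)"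
    by (simp add: sum.remove)
  also have "(\<Sum>j\<in>UNIV - {i}. f j) = 0" using assms by (intro sum.neutral) auto
  finally show ?thesis by simp
qed

lemma projTz_liftL: "(projTz G I ** liftL G w) $ r $ i =
   (if fst r \<in> I \<and> snd r \<in> G (fst r) then liftL G w $ r $ i else 0)"
  unfolding matrix_matrix_mult_def projTz_def
  by (auto simp: if_distrib[where f="\<lambda>a. a * c" for c] sum.delta cong: if_cong)

lemma times_IP: "(B ** (mat 1 - projT G I)) $ r $ i = (if i \<in> Eset G I then 0 else B $ r $ i)"
  unfolding matrix_matrix_mult_def projT_def mat_def
  by (simp only: vec_lambda_beta, subst sum_single_UNIV[where i=i]) auto

lemma Lhat_entry: "Lhat G w I $ r $ i =
  (if snd r \<in> G (fst r) \<and> i = snd r \<and> (fst r \<notin> I \<or> i \<in> Eset G I) then w (fst r) else 0)"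
  unfolding Lhat_def by (simp only: vector_minus_component times_IP projTz_liftL) (auto simp: liftL_def)

lemma Lhat_gram: "(transpose (Lhat G w I) ** Lhat G w I) $ i $ k =
   (if i = k then (\<Sum>t\<in>{t. i \<in> G t \<and> (t \<notin> I \<or> i \<in> Eset G I)}. (w t)\<^sup>2) else 0)"
proof -
  have "(transpose (Lhat G w I) ** Lhat G w I) $ i $ k =
     (\<Sum>r\<in>UNIV. Lhat G w I $ r $ i * Lhat G w I $ r $ k)"
    unfolding matrix_matrix_mult_def transpose_def by simp
  also have "\<dots> = (\<Sum>t\<in>UNIV. \<Sum>j\<in>UNIV. Lhat G w I $ (t, j) $ i * Lhat G w I $ (t, j) $ k)"
    by (simp add: sum.cartesian_product UNIV_Times_UNIV[symmetric] del: UNIV_Times_UNIV)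
  also have "\<dots> = (\<Sum>t\<in>UNIV. if i = k \<and> i \<in> G t \<and> (t \<notin> I \<or> i \<in> Eset G I) then (w t)\<^sup>2 else 0)"
    unfolding Lhat_entry
    by (rule sum.cong[OF refl], subst sum_single_UNIV[where i=i]) (auto simp: power2_eq_square)
  also have "\<dots> = (if i = k then (\<Sum>t\<in>{t. i \<in> G t \<and> (t \<notin> I \<or> i \<in> Eset G I)}. (w t)\<^sup>2) else 0)"
    by (auto simp: sum.If_cases)
  finally show ?thesis .
qed

lemma u_entry:
  fixes G :: "'g::finite \<Rightarrow> 'n::finite set"
  assumes cover: "\<And>i. \<exists>t. i \<in> G t" and wpos: "\<And>t. w t > 0"
    and tI: "t \<notin> I" and jG: "j \<in> G t"
  shows "(Lhat G w I *v (matrix_inv (transpose (Lhat G w I) ** Lhat G w I) *v b)) $ (t, j)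
     = w t * b $ j / (\<Sum>s\<in>{s. j \<in> G s \<and> (s \<notin> I \<or> j \<in> Eset G I)}. (w s)\<^sup>2)"
proof -
  define Lh where "Lh = Lhat G w I"
  define M where "M = transpose Lh ** Lh"
  define D where "D i = (\<Sum>s\<in>{s. i \<in> G s \<and> (s \<notin> I \<or> i \<in> Eset G I)}. (w s)\<^sup>2)" for i
  have Dpos: "D i > 0" for i
  proof -
    obtain s where s: "i \<in> G s \<and> (s \<notin> I \<or> i \<in> Eset G I)"
    proof (cases "i \<in> Eset G I")
      case True
      then show ?thesis using cover[of i] that by blast
    next
      case False
      then show ?thesis using that unfolding Eset_def by blast
    qed
    show ?thesis unfolding D_def
      by (rule sum_pos2[where i=s]) (use s wpos in \<open>auto simp: less_imp_neq[OF wpos, symmetric]\<close>)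
  qed
  have Ment: "M $ i $ k = (if i = k then D i else 0)" for i k
    unfolding M_def Lh_def D_def by (rule Lhat_gram)
  define N :: "real^'n^'n" where "N = (\<chi> i k. if i = k then 1 / D i else 0)"
  have "M ** N = mat 1"
    unfolding matrix_matrix_mult_def mat_def
  proof (simp only: vec_eq_iff vec_lambda_beta, intro allI)
    fix i k
    show "(\<Sum>l\<in>UNIV. M $ i $ l * N $ l $ k) = (if i = k then 1 else 0)"
      by (subst sum_single_UNIV[where i=i]) (auto simp: Ment N_def Dpos[THEN less_imp_neq, symmetric])
  qed
  then have "invertible M" unfolding invertible_def using matrix_left_right_inverse by blast
  then have MM: "M ** matrix_inv M = mat 1"
    unfolding invertible_def matrix_inv_def by (metis (mono_tags, lifting) someI_ex)
  define v where "v = matrix_inv M *v b"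
  have "M *v v = b" unfolding v_def by (simp add: matrix_vector_mul_assoc MM)
  then have "(M *v v) $ j = b $ j" by simp
  moreover have "(M *v v) $ j = D j * v $ j"
    unfolding matrix_vector_mult_def by (simp, subst sum_single_UNIV[where i=j]) (auto simp: Ment)
  ultimately have vj: "v $ j = b $ j / D j" using Dpos[of j] by (simp add: field_simps)
  have "(Lh *v v) $ (t, j) = w t * v $ j"
    unfolding matrix_vector_mult_def Lh_def
    by (simp, subst sum_single_UNIV[where i=j]) (auto simp: Lhat_entry tI jG)
  then show ?thesis using vj unfolding v_def M_def Lh_def D_def by simp
qed

lemma key_ineq:
  fixes G :: "'g::finite \<Rightarrow> 'n::finite set" and beta q :: "real^'n"
  assumes wpos: "\<And>t. w t > 0"
    and qsupp: "\<And>i. i \<in> Eset G Ib \<Longrightarrow> q $ i = 0"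
    and Gam: "\<And>t. t \<notin> Ib \<Longrightarrow>
       subnorm (G t) (\<chi> j. (w t)\<^sup>2 / (\<Sum>s\<in>{s. j \<in> G s \<and> s \<notin> Ib}. (w s)\<^sup>2) * beta $ j) \<le> w t"
  shows "inner beta q \<le> (\<Sum>t\<in>-Ib. w t * subnorm (G t) q)"
proof -
  define D where "D j = (\<Sum>s\<in>{s. j \<in> G s \<and> s \<notin> Ib}. (w s)\<^sup>2)" for j
  define gam where "gam t = (\<chi> j. (w t)\<^sup>2 / D j * beta $ j)" for t
  have step1: "beta $ j * q $ j = (\<Sum>t\<in>UNIV. if t \<notin> Ib \<and> j \<in> G t then gam t $ j * q $ j else 0)" for j
  proof (cases "j \<in> Eset G Ib")
    case True
    then have "q $ j = 0" using qsupp by blast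
    then show ?thesis by (simp add: sum.neutral)
  next
    case False
    then obtain s where s: "s \<notin> Ib" "j \<in> G s" unfolding Eset_def by blast
    have Dpos: "D j > 0" unfolding D_def
      by (rule sum_pos2[where i=s]) (use s wpos in \<open>auto simp: less_imp_neq[OF wpos, symmetric]\<close>)
    have "(\<Sum>t\<in>UNIV. if t \<notin> Ib \<and> j \<in> G t then gam t $ j * q $ j else 0)
        = (\<Sum>t\<in>{t. j \<in> G t \<and> t \<notin> Ib}. (w t)\<^sup>2) / D j * beta $ j * q $ j"
      unfolding gam_def by (simp add: sum.If_cases sum_divide_distrib sum_distrib_right conj_commute)
    also have "\<dots> = beta $ j * q $ j" using Dpos unfolding D_def by simp
    finally show ?thesis by simp
  qed
  have "inner beta q = (\<Sum>j\<in>UNIV. beta $ j * q $ j)" unfolding inner_vec_def by simp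
  also have "\<dots> = (\<Sum>j\<in>UNIV. \<Sum>t\<in>UNIV. if t \<notin> Ib \<and> j \<in> G t then gam t $ j * q $ j else 0)"
    using step1 by simp
  also have "\<dots> = (\<Sum>t\<in>UNIV. \<Sum>j\<in>UNIV. if t \<notin> Ib \<and> j \<in> G t then gam t $ j * q $ j else 0)"
    by (rule sum.swap)
  also have "\<dots> = (\<Sum>t\<in>-Ib. \<Sum>j\<in>G t. gam t $ j * q $ j)"
  proof -
    have e: "(\<Sum>j\<in>UNIV. if t \<notin> Ib \<and> j \<in> G t then gam t $ j * q $ j else 0)
          = (if t \<notin> Ib then (\<Sum>j\<in>G t. gam t $ j * q $ j) else 0)" for t
    proof (cases "t \<in> Ib")
      case False
      have "(\<Sum>j\<in>UNIV. if j \<in> G t then gam t $ j * q $ j else 0) = (\<Sum>j\<in>G t. gam t $ j * q $ j)"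
        by (simp add: sum.If_cases Int_absorb1)
      then show ?thesis using False by simp
    qed simp
    show ?thesis unfolding e by (simp add: sum.If_cases Compl_eq_Diff_UNIV set_diff_eq)
  qed
  also have "\<dots> \<le> (\<Sum>t\<in>-Ib. w t * subnorm (G t) q)"
  proof (rule sum_mono)
    fix t assume "t \<in> -Ib"
    then have "subnorm (G t) (gam t) \<le> w t" using Gam[of t] unfolding gam_def D_def by simp
    then have "subnorm (G t) (gam t) * subnorm (G t) q \<le> w t * subnorm (G t) q"
      by (intro mult_right_mono subnorm_nonneg)
    then show "(\<Sum>j\<in>G t. gam t $ j * q $ j) \<le> w t * subnorm (G t) q"
      using subnorm_cs[where S="G t" and a="gam t" and b=q] by linarith
  qed
  finally show ?thesis .
qed

lemma tendsto_subnorm: "(f \<longlongrightarrow> l) F \<Longrightarrow> ((\<lambda>x. subnorm S (f x)) \<longlongrightarrow> subnorm S l) F"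
  unfolding subnorm_def by (intro tendsto_intros)

lemma tendsto_blocknorm: "(f \<longlongrightarrow> l) F \<Longrightarrow> ((\<lambda>x. blocknorm G (f x) t) \<longlongrightarrow> blocknorm G l t) F"
  unfolding blocknorm_def by (intro tendsto_intros)

lemma tendsto_mv: "(f \<longlongrightarrow> l) F \<Longrightarrow> ((\<lambda>x. (M::real^'a::finite^'b::finite) *v f x) \<longlongrightarrow> M *v l) F"
  by (rule bounded_linear.tendsto[OF matrix_vector_mul_bounded_linear])

lemma tendsto_beta: "x \<longlonglongrightarrow> xt \<Longrightarrow> (\<lambda>k. betavec A y lam (x k)) \<longlonglongrightarrow> betavec A y lam xt"
  unfolding betavec_def by (intro tendsto_intros tendsto_mv)

lemma h_expand:
  fixes A :: "real^'n::finite^'m::finite"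
  assumes "lam > 0"
  shows "1 / (2 * lam) * (norm (A *v (xt + s *\<^sub>R d) - y))\<^sup>2 =
     1 / (2 * lam) * (norm (A *v xt - y))\<^sup>2 - s * inner (betavec A y lam xt) d
      + s\<^sup>2 * ((norm (A *v d))\<^sup>2 / (2 * lam))"
proof -
  define a where "a = A *v xt - y"
  have lin: "A *v (xt + s *\<^sub>R d) - y = a + s *\<^sub>R (A *v d)"
    unfolding a_def by (simp add: algebra_simps)
  have sq: "(norm (a + s *\<^sub>R (A *v d)))\<^sup>2 = (norm a)\<^sup>2 + 2 * s * inner a (A *v d) + s\<^sup>2 * (norm (A *v d))\<^sup>2"
    unfolding power2_norm_eq_inner
    by (simp add: inner_add_left inner_add_right inner_commute algebra_simps power2_eq_square)
  have ib: "inner a (A *v d) = - lam * inner (betavec A y lam xt) d"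
    unfolding betavec_def a_def using assms
    by (simp add: dot_lmul_matrix[symmetric])
  show ?thesis unfolding lin sq ib a_def[symmetric] using assms
    by (simp add: field_simps power2_eq_square)
qed

theorem proposition4p2:
  fixes G :: "'g::finite \<Rightarrow> 'n::finite set"
    and w :: "'g \<Rightarrow> real"
    and A :: "real^'n^'m::finite"
    and y :: "real^'m"
    and lam :: real
    and I :: "nat \<Rightarrow> 'g set"
    and x :: "nat \<Rightarrow> real^'n"
    and Ibar :: "'g set"
    and xt :: "real^'n"
  assumes groups_nonempty: "\<And>t. G t \<noteq> {}"
    and groups_cover: "(\<Union>t. G t) = UNIV"
    and weights_pos: "\<And>t. w t > 0"
    and lam_pos: "lam > 0"
    and update: "(\<forall>k. I (Suc k) = optionI_update G w (I k) (betavec A y lam (x (Suc k))))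
               \<or> (\<forall>k. I (Suc k) = optionII_update G w (I k) (betavec A y lam (x (Suc k))))"
    and stabilizes: "\<exists>K. \<forall>k\<ge>K. I k = Ibar"
    and converges: "x \<longlonglongrightarrow> xt"
    and restricted_min: "\<And>z. objective G (A ** projT G Ibar) y lam (liftL G w ** projT G Ibar) xt
                              \<le> objective G (A ** projT G Ibar) y lam (liftL G w ** projT G Ibar) z"
    and xt_support: "\<And>i. i \<notin> Eset G Ibar \<Longrightarrow> xt $ i = 0"
  shows "\<forall>z. objective G A y lam (liftL G w) xt \<le> objective G A y lam (liftL G w) z"
proof
  fix z
  define E where "E = Eset G Ibar"
  define beta where "beta = betavec A y lam xt"
  define Pv where "Pv v = projT G Ibar *v v" for v
  define R where "R v = (\<Sum>t\<in>UNIV. w t * subnorm (G t) v)" for v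
  define h where "h v = 1 / (2 * lam) * (norm (A *v v - y))\<^sup>2" for v
  have cover: "\<exists>t. i \<in> G t" for i using groups_cover by blast
  have Pv_ent: "Pv v $ i = (if i \<in> E then v $ i else 0)" for v i
    unfolding Pv_def E_def by (rule projT_mult)
  have objF: "objective G A y lam (liftL G w) v = h v + R v" for v
    unfolding objective_def h_def R_def norm12_liftL[OF weights_pos] ..
  have objR: "objective G (A ** projT G Ibar) y lam (liftL G w ** projT G Ibar) v = h (Pv v) + R (Pv v)" for v
    unfolding objective_def h_def R_def Pv_def matrix_vector_mul_assoc[symmetric] norm12_liftL[OF weights_pos] ..
  have hexp: "h (xt + s *\<^sub>R d) = h xt - s * inner beta d + s\<^sup>2 * ((norm (A *v d))\<^sup>2 / (2 * lam))" for s d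
    unfolding h_def beta_def by (rule h_expand[OF lam_pos])
  have Pxt: "Pv xt = xt" using xt_support by (simp add: vec_eq_iff Pv_ent E_def)
  have Rconv: "R ((1 - s) *\<^sub>R a + s *\<^sub>R b) \<le> (1 - s) * R a + s * R b" if "0 \<le> s" "s \<le> 1" for s a b
  proof -
    have "R ((1 - s) *\<^sub>R a + s *\<^sub>R b) \<le> (\<Sum>t\<in>UNIV. w t * ((1 - s) * subnorm (G t) a + s * subnorm (G t) b))"
      unfolding R_def by (intro sum_mono mult_left_mono subnorm_convex that less_imp_le[OF weights_pos])
    also have "\<dots> = (1 - s) * R a + s * R b"
      unfolding R_def sum_distrib_left sum.distrib[symmetric] by (intro sum.cong) (simp_all add: algebra_simps)
    finally show ?thesis .
  qed
  define d where "d = Pv z - xt"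
  have Pd: "Pv (xt + s *\<^sub>R d) = xt + s *\<^sub>R d" for s
    unfolding d_def using xt_support by (simp add: vec_eq_iff Pv_ent E_def)
  have step1: "inner beta d \<le> R (Pv z) - R xt"
  proof (rule ccontr)
    assume "\<not> ?thesis"
    then have del: "inner beta d - (R (Pv z) - R xt) > 0" by simp
    define c where "c = (norm (A *v d))\<^sup>2 / (2 * lam)"
    have c0: "c \<ge> 0" unfolding c_def using lam_pos by simp
    define s where "s = min 1 ((inner beta d - (R (Pv z) - R xt)) / (c + 1))"
    have s0: "s > 0" unfolding s_def using del c0 by simp
    have s1: "s \<le> 1" unfolding s_def by simp
    have sc: "s * c < inner beta d - (R (Pv z) - R xt)"
    proof -
      have "s * c \<le> (inner beta d - (R (Pv z) - R xt)) / (c + 1) * c"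
        unfolding s_def using c0 by (intro mult_right_mono) auto
      also have "\<dots> < inner beta d - (R (Pv z) - R xt)"
        using del c0 by (simp add: field_simps)
      finally show ?thesis .
    qed
    have "h xt + R xt \<le> h (xt + s *\<^sub>R d) + R (xt + s *\<^sub>R d)"
      using restricted_min[of "xt + s *\<^sub>R d"] unfolding objR Pd Pxt .
    also have "R (xt + s *\<^sub>R d) \<le> (1 - s) * R xt + s * R (Pv z)"
    proof -
      have "xt + s *\<^sub>R d = (1 - s) *\<^sub>R xt + s *\<^sub>R (Pv z)" unfolding d_def by (simp add: algebra_simps)
      then show ?thesis using Rconv[OF less_imp_le[OF s0] s1] by simp
    qed
    finally have "0 \<le> s * (s * c - (inner beta d - (R (Pv z) - R xt)))"
      unfolding hexp c_def by (simp add: algebra_simps power2_eq_square)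
    then have "0 \<le> s * c - (inner beta d - (R (Pv z) - R xt))"
      using s0 by (simp add: zero_le_mult_iff)
    then show False using sc by simp
  qed
  define q where "q = z - Pv z"
  have GtE: "j \<notin> E" if "t \<notin> Ibar" "j \<in> G t" for t j
    using that unfolding E_def Eset_def by blast
  have step2: "R (Pv z) + (\<Sum>t\<in>-Ibar. w t * subnorm (G t) q) \<le> R z"
  proof -
    have "R (Pv z) + (\<Sum>t\<in>-Ibar. w t * subnorm (G t) q)
        = (\<Sum>t\<in>UNIV. w t * subnorm (G t) (Pv z) + (if t \<in> Ibar then 0 else w t * subnorm (G t) q))"
      unfolding R_def by (simp add: sum.distrib sum.If_cases Compl_eq_Diff_UNIV set_diff_eq)
    also have "\<dots> \<le> R z"
      unfolding R_def
    proof (rule sum_mono)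
      fix t
      show "w t * subnorm (G t) (Pv z) + (if t \<in> Ibar then 0 else w t * subnorm (G t) q) \<le> w t * subnorm (G t) z"
      proof (cases "t \<in> Ibar")
        case True
        have "subnorm (G t) (Pv z) \<le> subnorm (G t) z"
          by (rule subnorm_mono) (simp add: Pv_ent)
        then show ?thesis using True weights_pos[of t] by simp
      next
        case False
        have "subnorm (G t) (Pv z) = subnorm (G t) 0"
          unfolding subnorm_def using GtE[OF False] by (intro arg_cong[where f=sqrt] sum.cong) (auto simp: Pv_ent)
        moreover have "subnorm (G t) q = subnorm (G t) z"
          unfolding subnorm_def q_def using GtE[OF False] by (intro arg_cong[where f=sqrt] sum.cong) (auto simp: Pv_ent)
        ultimately show ?thesis using False by (simp add: subnorm_def)
      qed
    qed
    finally show ?thesis .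
  qed
  define D where "D j = (\<Sum>s\<in>{s. j \<in> G s \<and> s \<notin> Ibar}. (w s)\<^sup>2)" for j
  have Dge: "(w t)\<^sup>2 \<le> D j" if "t \<notin> Ibar" "j \<in> G t" for t j
    unfolding D_def by (rule member_le_sum) (use that in auto)
  obtain K where K: "\<And>k. k \<ge> K \<Longrightarrow> I k = Ibar" using stabilizes by blast
  have xS: "(\<lambda>k. x (Suc k)) \<longlonglongrightarrow> xt" using LIMSEQ_Suc[OF converges] .
  have Gam: "subnorm (G t) (\<chi> j. (w t)\<^sup>2 / D j * beta $ j) \<le> w t" if tI: "t \<notin> Ibar" for t
    using update
  proof
    assume U: "\<forall>k. I (Suc k) = optionI_update G w (I k) (betavec A y lam (x (Suc k)))"
    have ev: "\<forall>k\<ge>K. subnorm (G t) (betavec A y lam (x (Suc k))) \<le> w t"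
    proof (intro allI impI)
      fix k assume "k \<ge> K"
      then have "Ibar = Ibar \<union> {t. subnorm (G t) (betavec A y lam (x (Suc k))) \<ge> w t}"
        using U K[of k] K[of "Suc k"] unfolding optionI_update_def by simp
      then show "subnorm (G t) (betavec A y lam (x (Suc k))) \<le> w t" using tI by auto
    qed
    have bnd: "subnorm (G t) beta \<le> w t"
      unfolding beta_def by (rule LIMSEQ_le_const2[OF tendsto_subnorm[OF tendsto_beta[OF xS]]]) (use ev in blast)
    have "subnorm (G t) (\<chi> j. (w t)\<^sup>2 / D j * beta $ j) \<le> subnorm (G t) beta"
    proof (rule subnorm_mono)
      fix j assume j: "j \<in> G t"
      have "0 < (w t)\<^sup>2" using weights_pos[of t] by simp
      moreover have "(w t)\<^sup>2 \<le> D j" using Dge[OF tI j] .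
      ultimately have Dp: "0 < D j" by linarith
      then have "0 \<le> (w t)\<^sup>2 / D j" "(w t)\<^sup>2 / D j \<le> 1" using Dge[OF tI j] by simp_all
      then show "\<bar>(\<chi> j. (w t)\<^sup>2 / D j * beta $ j) $ j\<bar> \<le> \<bar>beta $ j\<bar>"
        using mult_left_le_one_le[of "\<bar>beta $ j\<bar>" "(w t)\<^sup>2 / D j"] Dp by (simp add: abs_mult)
    qed
    then show ?thesis using bnd by linarith
  next
    assume U: "\<forall>k. I (Suc k) = optionII_update G w (I k) (betavec A y lam (x (Suc k)))"
    define Lh where "Lh = Lhat G w Ibar"
    define Mi where "Mi = matrix_inv (transpose Lh ** Lh)"
    have ev: "\<forall>k\<ge>K. blocknorm G (Lh *v (Mi *v betavec A y lam (x (Suc k)))) t \<le> 1"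
    proof (intro allI impI)
      fix k assume "k \<ge> K"
      then have "Ibar = Ibar \<union> {t. blocknorm G (Lh *v (Mi *v betavec A y lam (x (Suc k)))) t \<ge> 1}"
        using U K[of k] K[of "Suc k"] unfolding optionII_update_def Lh_def Mi_def by (simp add: Let_def)
      then show "blocknorm G (Lh *v (Mi *v betavec A y lam (x (Suc k)))) t \<le> 1" using tI by auto
    qed
    have bnd: "blocknorm G (Lh *v (Mi *v beta)) t \<le> 1"
      unfolding beta_def
      by (rule LIMSEQ_le_const2[OF tendsto_blocknorm[OF tendsto_mv[OF tendsto_mv[OF tendsto_beta[OF xS]]]]])
        (use ev in blast)
    have ue: "(Lh *v (Mi *v beta)) $ (t, j) = w t * beta $ j / D j" if j: "j \<in> G t" for j
    proof -
      have "{s. j \<in> G s \<and> (s \<notin> Ibar \<or> j \<in> Eset G Ibar)} = {s. j \<in> G s \<and> s \<notin> Ibar}"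
        using GtE[OF tI j] unfolding E_def by auto
      then show ?thesis
        using u_entry[OF cover weights_pos tI j, where b=beta] unfolding Lh_def Mi_def D_def by simp
    qed
    have "subnorm (G t) (\<chi> j. (w t)\<^sup>2 / D j * beta $ j)
        = sqrt ((w t)\<^sup>2 * (\<Sum>j\<in>G t. ((Lh *v (Mi *v beta)) $ (t, j))\<^sup>2))"
      unfolding subnorm_def sum_distrib_left
      by (intro arg_cong[where f=sqrt] sum.cong) (auto simp: ue power2_eq_square)
    also have "\<dots> = w t * blocknorm G (Lh *v (Mi *v beta)) t"
      unfolding blocknorm_def real_sqrt_mult using weights_pos[of t] by simp
    also have "\<dots> \<le> w t" using bnd weights_pos[of t] by (simp add: mult_left_le_one_le)
    finally show ?thesis .
  qed
  have step3: "inner beta q \<le> (\<Sum>t\<in>-Ibar. w t * subnorm (G t) q)"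
    by (rule key_ineq[OF weights_pos]) (use Gam in \<open>auto simp: q_def Pv_ent E_def D_def\<close>)
  have zd: "z = xt + 1 *\<^sub>R (d + q)" unfolding d_def q_def by simp
  have "h z = h xt - inner beta (d + q) + (norm (A *v (d + q)))\<^sup>2 / (2 * lam)"
    by (subst zd, subst hexp) simp
  also have "\<dots> \<ge> h xt - inner beta d - inner beta q"
    using lam_pos by (simp add: inner_add_right)
  finally have "h z \<ge> h xt - inner beta d - inner beta q" .
  then show "objective G A y lam (liftL G w) xt \<le> objective G A y lam (liftL G w) z"
    unfolding objF using step1 step2 step3 by linarith
qed

end
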